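(* If $\phi\in C(\mathbb{Z}_p,\mathbb{C}_p)$ and $y,s\in\mathbb{Z}_p$, then $T(S^y(\phi))(s)=T(\phi)(s+y)$.
   Context: Fix a prime $p$. $\mathbb{C}_p$ denotes the completion of an algebraic closure of $\mathbb{Q}_p$, with absolute value $|\cdot|$ normalized by $|p|=1/p$. $C(\mathbb{Z}_p,\mathbb{C}_p)$ is the $\mathbb{C}_p$-Banach space of continuous functions $\mathbb{Z}_p\to\mathbb{C}_p$ with the sup-norm $\|\cdot\|$. For $n\in\mathbb{Z}_{\ge0}$ and $x\in\mathbb{Z}_p$, $\binom{x}{n}=x(x-1)\cdots(x-n+1)/n!$. For $y\in\mathbb{Z}_p$ and $\phi\in C(\mathbb{Z}_p,\mathbb{C}_p)$ define $S^y(\phi)\in C(\mathbb{Z}_p,\mathbb{C}_p)$ by $S^y(\phi)(x)=\sum_{k\ge0}(-1)^k k!\binom yk\binom xk\phi(x-k)$. Define $T(\phi):\mathbb{Z}_p\to\mathbb{C}_p$ by $T(\phi)(y)=S^y(\phi)(-1)=\sum_{k\ge0}k!\,\phi(-1-k)\binom{y}{k}$. *)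

theory Defs
  imports "HOL-Analysis.Analysis" "HOL-Computational_Algebra.Polynomial"
begin

text \<open>Abstract model of C_p: a complete, algebraically closed field of characteristic 0
  with a non-archimedean absolute value inducing its metric, in which the algebraic
  numbers (roots of nonzero integer polynomials) are dense.  Together with the
  normalisation |p| = 1/p (imposed in the theorem) such a field is isometrically
  isomorphic to C_p.\<close>

class cp_field = field_char_0 + complete_space +
  fixes vabs :: "'a \<Rightarrow> real"
  assumes dist_vabs: "dist x y = vabs (x - y)"
    and vabs_eq_0: "vabs x = 0 \<longleftrightarrow> x = 0"
    and vabs_mult: "vabs (x * y) = vabs x * vabs y"
    and vabs_ultra: "vabs (x + y) \<le> max (vabs x) (vabs y)"
    and alg_closed: "n > 0 \<Longrightarrow> \<exists>z. z ^ n + (\<Sum>i<n. c i * z ^ i) = 0"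
    and alg_dense: "e > 0 \<Longrightarrow> \<exists>z n (q :: nat \<Rightarrow> int). q n \<noteq> 0 \<and> (\<Sum>i\<le>n. of_int (q i) * z ^ i) = 0 \<and> dist z x < e"

definition Zp :: "'a::cp_field set" where
  "Zp = closure (range of_int)"

definition S_op :: "'a::cp_field \<Rightarrow> ('a \<Rightarrow> 'a) \<Rightarrow> 'a \<Rightarrow> 'a" where
  "S_op y \<phi> x = (\<Sum>k. (-1) ^ k * fact k * (y gchoose k) * (x gchoose k) * \<phi> (x - of_nat k))"

definition T_op :: "('a::cp_field \<Rightarrow> 'a) \<Rightarrow> 'a \<Rightarrow> 'a" where
  "T_op \<phi> y = S_op y \<phi> (-1)"

end

theory Submission imports Defs begin

lemma vabs_dist0: "vabs (x::'a::cp_field) = dist x 0"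
  by (simp add: dist_vabs)

lemma vabs_nonneg: "0 \<le> vabs (x::'a::cp_field)"
  by (simp add: vabs_dist0)

lemma vabs_one: "vabs (1::'a::cp_field) = 1"
proof -
  have "vabs (1::'a) = vabs (1::'a) * vabs (1::'a)" using vabs_mult[of "1::'a" 1, unfolded mult_1] .
  moreover have "vabs (1::'a) \<noteq> 0" by (simp add: vabs_eq_0)
  ultimately show ?thesis by simp
qed

lemma vabs_minus: "vabs (- x) = vabs (x::'a::cp_field)"
proof -
  have "vabs (-1::'a) * vabs (-1::'a) = 1" using vabs_mult[of "-1::'a" "-1"] vabs_one[where 'a='a] by simp
  hence "vabs (-1::'a) = 1" using vabs_nonneg[of "-1::'a"]
    by (metis abs_of_nonneg abs_square_eq_1 power2_eq_square)
  thus ?thesis using vabs_mult[of "-1::'a" x] by simp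
qed

lemma vabs_commute: "vabs (x - y) = vabs (y - (x::'a::cp_field))"
  by (metis minus_diff_eq vabs_minus)

lemma vabs_power: "vabs (x ^ n) = vabs (x::'a::cp_field) ^ n"
  by (induction n) (simp_all add: vabs_one vabs_mult)

lemma vabs_prod: "vabs (prod f A) = (\<Prod>i\<in>A. vabs (f i :: 'a::cp_field))"
  by (induction A rule: infinite_finite_induct) (simp_all add: vabs_one vabs_mult)

lemma vabs_divide: "vabs (x / y) = vabs x / vabs (y::'a::cp_field)"
proof (cases "y = 0")
  case True thus ?thesis using vabs_eq_0[of "0::'a"] by simp
next
  case False
  have "vabs x = vabs (x / y) * vabs y" using vabs_mult[of "x/y" y] False by simp
  moreover have "vabs y \<noteq> 0" using False vabs_eq_0 by auto
  ultimately show ?thesis by simp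
qed

lemma vabs_sum_le:
  assumes "0 \<le> B" "\<And>i. i \<in> A \<Longrightarrow> vabs (f i :: 'a::cp_field) \<le> B"
  shows "vabs (sum f A) \<le> B"
  using assms(2)
proof (induction A rule: infinite_finite_induct)
  case (infinite A) thus ?case using assms(1) by (simp add: vabs_eq_0[THEN iffD2])
next
  case empty thus ?case using assms(1) by (simp add: vabs_eq_0[THEN iffD2])
next
  case (insert x F)
  hence "vabs (f x) \<le> B" "vabs (sum f F) \<le> B" by auto
  thus ?case using insert(1,2) by (auto intro: order_trans[OF vabs_ultra])
qed

lemma vabs_of_nat_le: "vabs (of_nat n :: 'a::cp_field) \<le> 1"
proof (induction n)
  case 0 thus ?case by (simp add: vabs_eq_0[THEN iffD2])
next
  case (Suc n) thus ?case using vabs_ultra[of "1::'a" "of_nat n"] by (simp add: vabs_one add.commute)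
qed

lemma vabs_of_int_le: "vabs (of_int z :: 'a::cp_field) \<le> 1"
proof (cases "z \<ge> 0")
  case True
  then have "(of_int z :: 'a) = of_nat (nat z)" by simp
  thus ?thesis using vabs_of_nat_le by metis
next
  case False
  then have "(of_int z :: 'a) = - of_nat (nat (-z))" by simp
  thus ?thesis using vabs_of_nat_le by (metis vabs_minus)
qed

lemma vabs_prod_le1:
  assumes "\<And>i. i \<in> A \<Longrightarrow> vabs (f i :: 'a::cp_field) \<le> 1"
  shows "vabs (prod f A) \<le> 1"
  unfolding vabs_prod using assms by (simp add: prod_le_1 vabs_nonneg)

lemma vabs_fact_Suc_le: "vabs (fact (Suc n) :: 'a::cp_field) \<le> vabs (fact n :: 'a)"
proof -
  have "vabs (fact (Suc n) :: 'a) = vabs (of_nat (Suc n) :: 'a) * vabs (fact n :: 'a)"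
    by (simp add: vabs_mult del: of_nat_Suc)
  also have "\<dots> \<le> 1 * vabs (fact n :: 'a)"
    by (rule mult_right_mono[OF vabs_of_nat_le vabs_nonneg])
  finally show ?thesis by simp
qed

lemma vabs_fact_mono: "m \<le> n \<Longrightarrow> vabs (fact n :: 'a::cp_field) \<le> vabs (fact m :: 'a)"
  by (induction n rule: dec_induct) (auto intro: order_trans[OF vabs_fact_Suc_le] simp del: fact_Suc)


lemma partial_diff:
  fixes f :: "nat \<Rightarrow> 'a::cp_field"
  assumes "n \<le> m"
  shows "sum f {..<m} - sum f {..<n} = sum f {n..<m}"
  using sum_diff_nat_ivl[of 0 n m f] assms by (simp add: lessThan_atLeast0)

lemma summable_vabs0:
  fixes f :: "nat \<Rightarrow> 'a::cp_field"
  assumes "\<And>e. e > 0 \<Longrightarrow> \<exists>N. \<forall>n\<ge>N. vabs (f n) < e"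
  shows "summable f"
proof -
  have "Cauchy (\<lambda>n. sum f {..<n})"
    unfolding Cauchy_def
  proof (intro allI impI)
    fix e :: real assume "e > 0"
    then obtain N where N: "\<And>n. n \<ge> N \<Longrightarrow> vabs (f n) < e/2"
      using assms[of "e/2"] by auto
    have *: "vabs (sum f {..<m} - sum f {..<n}) < e" if "N \<le> n" "n \<le> m" for m n
    proof -
      have "vabs (sum f {n..<m}) \<le> e/2"
        by (rule vabs_sum_le) (use \<open>e>0\<close> N that in \<open>auto intro: less_imp_le\<close>)
      thus ?thesis using partial_diff[OF that(2), of f] \<open>e>0\<close> by simp
    qed
    show "\<exists>M. \<forall>m\<ge>M. \<forall>n\<ge>M. dist (sum f {..<m}) (sum f {..<n}) < e"
    proof (intro exI allI impI)
      fix m n assume "N \<le> m" "N \<le> n"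
      thus "dist (sum f {..<m}) (sum f {..<n}) < e"
        unfolding dist_vabs using *[of n m] *[of m n] vabs_commute[of "sum f {..<m}" "sum f {..<n}"]
        by (cases "n \<le> m") auto
    qed
  qed
  then have "convergent (\<lambda>n. sum f {..<n})" by (simp add: Cauchy_convergent_iff)
  then show ?thesis unfolding convergent_def summable_def sums_def by blast
qed

lemma tail_bound:
  fixes f :: "nat \<Rightarrow> 'a::cp_field"
  assumes "summable f" "0 \<le> B" "\<And>k. k \<ge> M \<Longrightarrow> vabs (f k) \<le> B"
  shows "vabs (suminf f - sum f {..<M}) \<le> B"
proof -
  have "(\<lambda>n. sum f {..<n}) \<longlonglongrightarrow> suminf f"
    using summable_sums[OF assms(1)] unfolding sums_def .
  then have "(\<lambda>n. dist (sum f {..<n}) (sum f {..<M})) \<longlonglongrightarrow> dist (suminf f) (sum f {..<M})"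
    by (intro tendsto_intros)
  moreover have "\<forall>n\<ge>M. dist (sum f {..<n}) (sum f {..<M}) \<le> B"
  proof (intro allI impI)
    fix n assume "M \<le> n"
    have "vabs (sum f {M..<n}) \<le> B"
      by (rule vabs_sum_le) (use assms in auto)
    thus "dist (sum f {..<n}) (sum f {..<M}) \<le> B"
      unfolding dist_vabs using partial_diff[OF \<open>M \<le> n\<close>, of f] by simp
  qed
  ultimately have "dist (suminf f) (sum f {..<M}) \<le> B" by (rule Lim_bounded)
  thus ?thesis by (simp add: dist_vabs)
qed

lemma sums_cmult_vabs:
  fixes f :: "nat \<Rightarrow> 'a::cp_field"
  assumes "f sums l"
  shows "(\<lambda>n. c * f n) sums (c * l)"
proof (cases "c = 0")
  case True thus ?thesis by (simp add: sums_def)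
next
  case False
  then have cp: "vabs c > 0" using vabs_nonneg[of c] vabs_eq_0[of c] by auto
  have L: "(\<lambda>n. sum f {..<n}) \<longlonglongrightarrow> l" using assms unfolding sums_def .
  show ?thesis unfolding sums_def
  proof (rule metric_LIMSEQ_I)
    fix r :: real assume "r > 0"
    then obtain no where no: "\<And>n. n \<ge> no \<Longrightarrow> dist (sum f {..<n}) l < r / vabs c"
      using metric_LIMSEQ_D[OF L, of "r / vabs c"] cp by auto
    show "\<exists>no. \<forall>n\<ge>no. dist (\<Sum>i<n. c * f i) (c * l) < r"
    proof (intro exI allI impI)
      fix n assume "n \<ge> no"
      have "dist (\<Sum>i<n. c * f i) (c * l) = vabs c * dist (sum f {..<n}) l"
        by (simp add: dist_vabs sum_distrib_left[symmetric] right_diff_distrib[symmetric] vabs_mult)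
      also have "\<dots> < vabs c * (r / vabs c)"
        using no[OF \<open>n \<ge> no\<close>] cp by (intro mult_strict_left_mono) auto
      finally show "dist (\<Sum>i<n. c * f i) (c * l) < r" using cp by simp
    qed
  qed
qed

lemma vabs_fact_mult_p:
  fixes p :: nat
  assumes "p > 0" "vabs (of_nat p :: 'a::cp_field) = 1 / real p"
  shows "vabs (fact (q * p) :: 'a) \<le> (1 / real p) ^ q"
proof (induction q)
  case 0 thus ?case by (simp add: vabs_one)
next
  case (Suc q)
  have e: "Suc q * p = Suc (q * p + (p - 1))" using assms(1) by simp
  have "vabs (fact (Suc q * p) :: 'a) = vabs (of_nat (Suc q * p) :: 'a) * vabs (fact (q * p + (p - 1)) :: 'a)"
    unfolding e fact_Suc by (simp add: vabs_mult del: of_nat_Suc of_nat_mult mult_Suc)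
  also have "\<dots> \<le> (1 / real p) * (1 / real p) ^ q"
  proof (rule mult_mono)
    have "vabs (of_nat (Suc q * p) :: 'a) = vabs (of_nat (Suc q) :: 'a) * vabs (of_nat p :: 'a)"
      by (simp only: of_nat_mult vabs_mult)
    also have "\<dots> \<le> 1 * (1 / real p)"
      unfolding assms(2) by (rule mult_right_mono[OF vabs_of_nat_le]) auto
    finally show "vabs (of_nat (Suc q * p) :: 'a) \<le> 1 / real p" by simp
    show "vabs (fact (q * p + (p - 1)) :: 'a) \<le> (1 / real p) ^ q"
      using vabs_fact_mono[of "q * p" "q * p + (p - 1)", where 'a='a] Suc.IH by simp
  qed (auto simp: vabs_nonneg)
  finally show ?case by simp
qed

lemma vabs_fact_small:
  fixes p :: nat
  assumes "prime p" "vabs (of_nat p :: 'a::cp_field) = 1 / real p" "e > 0"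
  shows "\<exists>N. \<forall>n\<ge>N. vabs (fact n :: 'a) < e"
proof -
  have p1: "p > 1" using assms(1) prime_gt_1_nat by blast
  then obtain q where q: "(1 / real p) ^ q < e" using real_arch_pow_inv[OF assms(3), of "1 / real p"] by auto
  show ?thesis
  proof (intro exI allI impI)
    fix n assume "q * p \<le> n"
    have "vabs (fact n :: 'a) \<le> vabs (fact (q * p) :: 'a)" by (rule vabs_fact_mono) fact
    also have "\<dots> \<le> (1 / real p) ^ q" using vabs_fact_mult_p[OF _ assms(2)] p1 by simp
    finally show "vabs (fact n :: 'a) < e" using q by simp
  qed
qed


lemma of_int_in_Zp: "(of_int z :: 'a::cp_field) \<in> Zp"
  unfolding Zp_def by (rule closure_subset[THEN subsetD]) (rule rangeI)

lemma dist0: "dist 0 x = vabs (x::'a::cp_field)"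
  by (simp only: dist_vabs diff_0 vabs_minus)

lemma Zp_sub_cball: "(Zp :: 'a::cp_field set) \<subseteq> cball 0 1"
  unfolding Zp_def
proof (rule closure_minimal)
  show "range of_int \<subseteq> cball (0::'a) 1"
  proof
    fix w :: 'a assume "w \<in> range of_int"
    then obtain z where "w = of_int z" by blast
    then show "w \<in> cball 0 1" unfolding mem_cball dist0 using vabs_of_int_le by simp
  qed
qed simp

lemma vabs_Zp: "x \<in> Zp \<Longrightarrow> vabs (x::'a::cp_field) \<le> 1"
  using Zp_sub_cball[where 'a='a] unfolding subset_iff mem_cball dist0 by blast


lemma vabs_gchoose_int: "vabs ((of_int z :: 'a::cp_field) gchoose k) \<le> 1"
proof (cases "z \<ge> 0")
  case True
  then have "(of_int z :: 'a) gchoose k = of_nat (nat z choose k)"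
    by (simp add: binomial_gbinomial)
  thus ?thesis using vabs_of_nat_le by metis
next
  case False
  have "(of_int z :: 'a) gchoose k = (-1) ^ k * ((of_nat k - of_int z - 1) gchoose k)"
    by (rule gbinomial_negated_upper)
  also have "(of_nat k - of_int z - 1 :: 'a) = of_nat (nat (int k - z - 1))"
    using False by simp
  also have "(of_nat (nat (int k - z - 1)) :: 'a) gchoose k = of_nat (nat (int k - z - 1) choose k)"
    by (simp add: binomial_gbinomial)
  finally have "vabs ((of_int z :: 'a) gchoose k) = vabs ((of_nat (nat (int k - z - 1) choose k)) :: 'a)"
    by (simp add: vabs_mult vabs_power vabs_minus vabs_one)
  thus ?thesis using vabs_of_nat_le by metis
qed

lemma prod_lip:
  fixes x x' :: "'a::cp_field"
  assumes "vabs x \<le> 1" "vabs x' \<le> 1"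
  shows "vabs ((\<Prod>i = 0..<k. x - of_nat i) - (\<Prod>i = 0..<k. x' - of_nat i)) \<le> vabs (x - x')"
proof (induction k)
  case 0 thus ?case by (simp add: vabs_nonneg vabs_eq_0[THEN iffD2])
next
  case (Suc k)
  have d1: "vabs (x - of_nat i) \<le> 1" for i
    using vabs_ultra[of x "- of_nat i"] assms(1) vabs_of_nat_le[of i, where 'a='a] vabs_minus[of "of_nat i :: 'a"]
    by simp
  have d2: "vabs (x' - of_nat i) \<le> 1" for i
    using vabs_ultra[of x' "- of_nat i"] assms(2) vabs_of_nat_le[of i, where 'a='a] vabs_minus[of "of_nat i :: 'a"]
    by simp
  define A where "A = (\<Prod>i = 0..<k. x - of_nat i)"
  define B where "B = (\<Prod>i = 0..<k. x' - of_nat i)"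
  have vB: "vabs B \<le> 1" unfolding B_def by (rule vabs_prod_le1) (use d2 in auto)
  have eq: "(\<Prod>i = 0..<Suc k. x - of_nat i) - (\<Prod>i = 0..<Suc k. x' - of_nat i)
      = (A - B) * (x - of_nat k) + B * (x - x')"
    by (simp add: A_def B_def algebra_simps)
  have "vabs ((A - B) * (x - of_nat k)) \<le> vabs (x - x')"
    unfolding vabs_mult using Suc.IH d1[of k] vabs_nonneg[of "A - B"]
    by (simp add: A_def B_def) (metis mult_left_le mult.commute vabs_nonneg order_trans)
  moreover have "vabs (B * (x - x')) \<le> vabs (x - x')"
    unfolding vabs_mult using vB vabs_nonneg[of "x - x'"] vabs_nonneg[of B] by (simp add: mult_left_le_one_le)
  ultimately show ?case unfolding eq using vabs_ultra[of "(A - B) * (x - of_nat k)" "B * (x - x')"] by simp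
qed

lemma vabs_gchoose_Zp:
  assumes "x \<in> Zp"
  shows "vabs ((x::'a::cp_field) gchoose k) \<le> 1"
proof -
  have fk: "vabs (fact k :: 'a) > 0" using vabs_nonneg[of "fact k :: 'a"] vabs_eq_0[of "fact k :: 'a"] by simp
  obtain y where y: "y \<in> range (of_int :: int \<Rightarrow> 'a)" "dist y x < vabs (fact k :: 'a)"
    using assms fk unfolding Zp_def closure_approachable by blast
  then obtain z where z: "y = of_int z" by auto
  have vx: "vabs x \<le> 1" using vabs_Zp[OF assms] .
  have vy: "vabs y \<le> 1" using z vabs_of_int_le by simp
  have "vabs (fact k :: 'a) * vabs ((x gchoose k) - (y gchoose k))
      = vabs ((\<Prod>i = 0..<k. x - of_nat i) - (\<Prod>i = 0..<k. y - of_nat i))"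
    by (simp add: vabs_mult[symmetric] right_diff_distrib gbinomial_mult_fact)
  also have "\<dots> \<le> vabs (x - y)" by (rule prod_lip[OF vx vy])
  also have "\<dots> < vabs (fact k :: 'a)" using y(2) by (simp add: dist_vabs vabs_commute)
  finally have "vabs ((x gchoose k) - (y gchoose k)) < 1" using fk by simp
  moreover have "vabs (y gchoose k) \<le> 1" using z vabs_gchoose_int by simp
  moreover have "x gchoose k = ((x gchoose k) - (y gchoose k)) + (y gchoose k)" by simp
  ultimately show ?thesis using vabs_ultra[of "(x gchoose k) - (y gchoose k)" "y gchoose k"] by simp
qed


lemma Zp_compact:
  fixes p :: nat
  assumes "prime p" "vabs (of_nat p :: 'a::cp_field) = 1 / real p"
  shows "compact (Zp :: 'a set)"
  unfolding compact_eq_totally_bounded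
proof (intro conjI allI impI)
  show "complete (Zp :: 'a set)" unfolding complete_eq_closed Zp_def by simp
  fix e :: real assume "e > 0"
  have p1: "p > 1" using assms(1) prime_gt_1_nat by blast
  then obtain q where q: "(1 / real p) ^ q < e" using real_arch_pow_inv[OF \<open>e>0\<close>, of "1 / real p"] by auto
  define P where "P = int p ^ q"
  have P0: "P > 0" using p1 by (simp add: P_def)
  show "\<exists>k. finite k \<and> (Zp :: 'a set) \<subseteq> (\<Union>x\<in>k. ball x e)"
  proof (rule exI[where x="(of_int :: int \<Rightarrow> 'a) ` {0..<P}"], intro conjI)
    show "finite ((of_int :: int \<Rightarrow> 'a) ` {0..<P})" by simp
    show "(Zp :: 'a set) \<subseteq> (\<Union>x\<in>(of_int :: int \<Rightarrow> 'a) ` {0..<P}. ball x e)"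
    proof
      fix x :: 'a assume "x \<in> Zp"
      then obtain y where y: "y \<in> range (of_int :: int \<Rightarrow> 'a)" "dist y x < e"
        using \<open>e>0\<close> unfolding Zp_def closure_approachable by blast
      then obtain z where z: "y = of_int z" by auto
      define r where "r = z mod P"
      have r: "r \<in> {0..<P}" using P0 by (simp add: r_def)
      have "z = P * (z div P) + r" by (simp add: r_def)
      then have "of_int z - of_int r = (of_int (P * (z div P)) :: 'a)"
        by (metis add_diff_cancel_right' of_int_diff)
      then have zr: "(of_int z :: 'a) - of_int r = of_nat p ^ q * of_int (z div P)"
        by (simp add: P_def)
      have "vabs ((of_int r :: 'a) - of_int z) = vabs ((of_int z :: 'a) - of_int r)"
        by (rule vabs_commute)
      also have "\<dots> = (1 / real p) ^ q * vabs (of_int (z div P) :: 'a)"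
        unfolding zr vabs_mult vabs_power assms(2) ..
      also have "\<dots> \<le> (1 / real p) ^ q * 1"
        by (rule mult_left_mono[OF vabs_of_int_le]) simp
      finally have "vabs ((of_int r :: 'a) - of_int z) \<le> (1 / real p) ^ q" by simp
      with q have d1: "vabs ((of_int r :: 'a) - of_int z) < e" by simp
      have d2: "vabs ((of_int z :: 'a) - x) < e" using y(2) z by (simp add: dist_vabs)
      have "vabs ((of_int r :: 'a) - x) < e"
        using vabs_ultra[of "(of_int r :: 'a) - of_int z" "of_int z - x"] d1 d2 by simp
      then show "x \<in> (\<Union>x\<in>(of_int :: int \<Rightarrow> 'a) ` {0..<P}. ball x e)"
        using r by (auto simp: dist_vabs)
    qed
  qed
qed

lemma phi_bounded:
  fixes p :: nat and \<phi> :: "'a::cp_field \<Rightarrow> 'a"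
  assumes "prime p" "vabs (of_nat p :: 'a) = 1 / real p" "continuous_on Zp \<phi>"
  shows "\<exists>M. M \<ge> 0 \<and> (\<forall>x\<in>Zp. vabs (\<phi> x) \<le> M)"
proof -
  have "compact (\<phi> ` Zp)" by (rule compact_continuous_image[OF assms(3) Zp_compact[OF assms(1,2)]])
  then have "bounded (\<phi> ` Zp)" by (rule compact_imp_bounded)
  then obtain M where M: "\<forall>y\<in>\<phi> ` Zp. dist 0 y \<le> M" unfolding bounded_any_center[where a=0] by blast
  show ?thesis
  proof (intro exI conjI)
    show "\<forall>x\<in>Zp. vabs (\<phi> x) \<le> M" using M unfolding dist0 by blast
    have "(0::'a) \<in> Zp" using of_int_in_Zp[of 0] by simp
    then show "M \<ge> 0" using M by (meson image_eqI order_trans zero_le_dist)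
  qed
qed


lemma double_series:
  fixes a :: "nat \<Rightarrow> nat \<Rightarrow> 'a::cp_field" and E :: "nat \<Rightarrow> real"
  assumes E: "\<And>n k. vabs (a n k) \<le> E (n + k)"
    and Emono: "\<And>m n. m \<le> n \<Longrightarrow> E n \<le> E m"
    and E0: "\<And>e. e > 0 \<Longrightarrow> \<exists>N. \<forall>n\<ge>N. E n < e"
    and Enn: "\<And>n. E n \<ge> 0"
  shows "(\<lambda>n. suminf (a n)) sums (suminf (\<lambda>m. \<Sum>i\<le>m. a i (m - i)))"
proof -
  define d where "d m = (\<Sum>i\<le>m. a i (m - i))" for m
  have vd: "vabs (d m) \<le> E m" for m
  proof -
    have "\<And>i. i \<le> m \<Longrightarrow> vabs (a i (m - i)) \<le> E m" using E by (metis le_add_diff_inverse)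
    then show ?thesis unfolding d_def by (intro vabs_sum_le Enn) auto
  qed
  have sd: "summable d"
    by (rule summable_vabs0) (use E0 vd in \<open>meson le_less_trans\<close>)
  have sa: "summable (a n)" for n
  proof (rule summable_vabs0)
    fix e :: real assume "e > 0"
    then obtain N where "\<forall>n\<ge>N. E n < e" using E0 by blast
    then show "\<exists>N. \<forall>k\<ge>N. vabs (a n k) < e"
      using E Emono by (meson le_add2 le_less_trans order_trans)
  qed
  define L where "L = suminf d"
  have DL: "(\<lambda>N. sum d {..<N}) \<longlonglongrightarrow> L" using summable_sums[OF sd] unfolding L_def sums_def .
  have Deq: "sum d {..<N} = (\<Sum>n<N. \<Sum>k<N - n. a n k)" for N
  proof -
    have "sum d {..<N} = (\<Sum>(i,j)\<in>{(i,j). i+j < N}. a i j)"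
      unfolding d_def by (rule sum.triangle_reindex[symmetric])
    also have "{(i,j). i+j < N} = Sigma {..<N} (\<lambda>i. {..<N - i})" by auto
    also have "(\<Sum>(i,j)\<in>Sigma {..<N} (\<lambda>i. {..<N - i}). a i j) = (\<Sum>n<N. \<Sum>k<N - n. a n k)"
      by (rule sum.Sigma[symmetric]) auto
    finally show ?thesis .
  qed
  have RD: "vabs ((\<Sum>n<N. suminf (a n)) - sum d {..<N}) \<le> E N" for N
  proof -
    have "(\<Sum>n<N. suminf (a n)) - sum d {..<N} = (\<Sum>n<N. suminf (a n) - (\<Sum>k<N - n. a n k))"
      unfolding Deq by (simp add: sum_subtractf)
    also have "vabs \<dots> \<le> E N"
    proof (rule vabs_sum_le[OF Enn])
      fix n assume "n \<in> {..<N}"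
      show "vabs (suminf (a n) - (\<Sum>k<N - n. a n k)) \<le> E N"
      proof (rule tail_bound[OF sa Enn])
        fix k assume "N - n \<le> k"
        then have "N \<le> n + k" using \<open>n \<in> {..<N}\<close> by auto
        then show "vabs (a n k) \<le> E N" using E[of n k] Emono[of N "n+k"] by simp
      qed
    qed
    finally show ?thesis .
  qed
  have dd: "(\<lambda>m. \<Sum>i\<le>m. a i (m - i)) = d" by (rule ext) (simp add: d_def)
  show ?thesis unfolding sums_def dd L_def[symmetric]
  proof (rule metric_LIMSEQ_I)
    fix r :: real assume "r > 0"
    obtain N1 where N1: "\<forall>n\<ge>N1. E n < r" using E0[OF \<open>r>0\<close>] by blast
    obtain N2 where N2: "\<forall>n\<ge>N2. dist (sum d {..<n}) L < r" using metric_LIMSEQ_D[OF DL \<open>r>0\<close>] by blast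
    show "\<exists>no. \<forall>n\<ge>no. dist (\<Sum>i<n. suminf (a i)) L < r"
    proof (intro exI allI impI)
      fix n assume "max N1 N2 \<le> n"
      then have h1: "vabs ((\<Sum>i<n. suminf (a i)) - sum d {..<n}) < r" using RD[of n] N1 by force
      have h2: "vabs (sum d {..<n} - L) < r" using N2 \<open>max N1 N2 \<le> n\<close> by (auto simp: dist_vabs)
      show "dist (\<Sum>i<n. suminf (a i)) L < r"
        using vabs_ultra[of "(\<Sum>i<n. suminf (a i)) - sum d {..<n}" "sum d {..<n} - L"] h1 h2
        by (simp add: dist_vabs)
    qed
  qed
qed


lemma gchoose_neg1: "((-1::'a::field_char_0) gchoose n) = (-1) ^ n"
  using gbinomial_negated_upper[of "-1::'a" n] by (simp add: binomial_gbinomial[symmetric])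

lemma gchoose_neg_nat: "((-1 - of_nat n :: 'a::field_char_0) gchoose k) = (-1) ^ k * of_nat ((n + k) choose k)"
proof -
  have "(of_nat k - (-1 - of_nat n) - 1 :: 'a) = of_nat (n + k)" by simp
  then show ?thesis using gbinomial_negated_upper[of "-1 - of_nat n :: 'a" k]
    by (simp add: binomial_gbinomial add.commute)
qed

lemma fact_combine: "(fact n :: 'a::field_char_0) * fact k * of_nat ((n + k) choose k) = fact (n + k)"
proof -
  have "fact k * fact (n + k - k) * ((n + k) choose k) = (fact (n + k) :: nat)"
    by (rule binomial_fact_lemma) simp
  then have "(of_nat (fact k * fact n * ((n + k) choose k)) :: 'a) = of_nat (fact (n + k))" by simp
  then show ?thesis by (simp only: of_nat_mult of_nat_fact mult.commute[of "fact n" "fact k"])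
qed

lemma small_scaled:
  assumes "\<And>e. e > 0 \<Longrightarrow> \<exists>N. \<forall>n\<ge>N. vabs (fact n :: 'a::cp_field) < e" "M \<ge> 0" "e > 0"
  shows "\<exists>N. \<forall>n\<ge>N. M * vabs (fact n :: 'a) < e"
proof -
  obtain N where N: "\<forall>n\<ge>N. vabs (fact n :: 'a) < e / (M + 1)" using assms(1)[of "e/(M+1)"] assms(2,3) by auto
  show ?thesis
  proof (intro exI allI impI)
    fix n assume "N \<le> n"
    have "M * vabs (fact n :: 'a) \<le> (M + 1) * vabs (fact n :: 'a)"
      using vabs_nonneg[of "fact n :: 'a"] by (intro mult_right_mono) auto
    also have "\<dots> < (M + 1) * (e / (M + 1))" using N \<open>N \<le> n\<close> assms(2) by (intro mult_strict_left_mono) auto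
    finally show "M * vabs (fact n :: 'a) < e" using assms(2) by simp
  qed
qed

theorem corollary6p5:
  fixes p :: nat and \<phi> :: "'a::cp_field \<Rightarrow> 'a" and y s :: 'a
  assumes "prime p"
    and "vabs (of_nat p :: 'a) = 1 / real p"
    and "continuous_on Zp \<phi>"
    and "y \<in> Zp" and "s \<in> Zp"
  shows "T_op (S_op y \<phi>) s = T_op \<phi> (s + y)"
proof -
  obtain M where M0: "M \<ge> 0" and M: "\<And>x. x \<in> Zp \<Longrightarrow> vabs (\<phi> x) \<le> M"
    using phi_bounded[OF assms(1,2,3)] by blast
  have fs: "\<And>e. e > 0 \<Longrightarrow> \<exists>N. \<forall>n\<ge>N. vabs (fact n :: 'a) < e"
    using vabs_fact_small[OF assms(1,2)] by blast
  have negZ: "(-1 - of_nat m :: 'a) \<in> Zp" for m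
    using of_int_in_Zp[of "-1 - int m", where 'a='a] by simp
  define c where "c n = (-1) ^ n * fact n * (s gchoose n) * ((-1) gchoose n)" for n
  define b where "b n k = (-1) ^ k * fact k * (y gchoose k) * ((-1 - of_nat n) gchoose k)
      * \<phi> (-1 - of_nat n - of_nat k)" for n k
  define a where "a n k = c n * b n k" for n k
  have aeq: "a n k = fact (n + k) * (s gchoose n) * (y gchoose k) * \<phi> (-1 - of_nat (n + k))" for n k
  proof -
    have "a n k = ((-1) ^ n * (-1) ^ n) * ((-1) ^ k * (-1) ^ k) * (fact n * fact k * of_nat ((n + k) choose k))
        * (s gchoose n) * (y gchoose k) * \<phi> (-1 - of_nat n - of_nat k)"
      unfolding a_def c_def b_def gchoose_neg1 gchoose_neg_nat by (simp add: algebra_simps)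
    also have "\<dots> = fact (n + k) * (s gchoose n) * (y gchoose k) * \<phi> (-1 - of_nat (n + k))"
      unfolding fact_combine by (simp add: power_mult_distrib[symmetric] algebra_simps)
    finally show ?thesis .
  qed
  define E where "E m = M * vabs (fact m :: 'a)" for m
  have aE: "vabs (a n k) \<le> E (n + k)" for n k
  proof -
    have "vabs (a n k) = vabs (fact (n + k) :: 'a) * (vabs (s gchoose n) * vabs (y gchoose k) * vabs (\<phi> (-1 - of_nat (n + k))))"
      unfolding aeq by (simp add: vabs_mult mult_ac)
    also have "\<dots> \<le> vabs (fact (n + k) :: 'a) * (1 * 1 * M)"
      by (intro mult_left_mono mult_mono vabs_gchoose_Zp assms M negZ) (auto simp: vabs_nonneg)
    finally show ?thesis by (simp add: E_def mult_ac)
  qed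
  have Emono: "m \<le> n \<Longrightarrow> E n \<le> E m" for m n
    unfolding E_def using M0 vabs_fact_mono[of m n, where 'a='a] by (simp add: mult_left_mono)
  have E0: "\<And>e. e > 0 \<Longrightarrow> \<exists>N. \<forall>n\<ge>N. E n < e"
    unfolding E_def using small_scaled[OF fs M0] by blast
  have Enn: "E n \<ge> 0" for n unfolding E_def using M0 by (simp add: vabs_nonneg)
  have DS: "(\<lambda>n. suminf (a n)) sums (suminf (\<lambda>m. \<Sum>i\<le>m. a i (m - i)))"
    by (rule double_series[OF aE Emono E0 Enn])
  have sb: "summable (b n)" for n
  proof (rule summable_vabs0)
    fix e :: real assume "e > 0"
    then obtain N where N: "\<forall>k\<ge>N. M * vabs (fact k :: 'a) < e" using small_scaled[OF fs M0] by blast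
    have "vabs (b n k) \<le> M * vabs (fact k :: 'a)" for k
    proof -
      have "b n k = (-1) ^ k * (fact k * ((y gchoose k) * ((-1 - of_nat n) gchoose k) * \<phi> (-1 - of_nat n - of_nat k)))"
        unfolding b_def by (simp only: mult_ac)
      then have "vabs (b n k) = vabs (fact k :: 'a) * (vabs (y gchoose k) * vabs ((-1 - of_nat n :: 'a) gchoose k) * vabs (\<phi> (-1 - of_nat n - of_nat k)))"
        by (simp only: vabs_mult vabs_power vabs_minus vabs_one power_one mult_1)
      also have "\<dots> \<le> vabs (fact k :: 'a) * (1 * 1 * M)"
        using negZ[of "n + k"]
        by (intro mult_left_mono mult_mono vabs_gchoose_Zp assms M negZ) (auto simp: vabs_nonneg algebra_simps)
      finally show ?thesis by (simp add: mult_ac)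
    qed
    then show "\<exists>N. \<forall>k\<ge>N. vabs (b n k) < e" using N by (meson le_less_trans)
  qed
  have row: "suminf (a n) = c n * S_op y \<phi> (-1 - of_nat n)" for n
  proof -
    have "S_op y \<phi> (-1 - of_nat n) = suminf (b n)" unfolding S_op_def b_def by simp
    moreover have "(\<lambda>k. c n * b n k) sums (c n * suminf (b n))"
      by (rule sums_cmult_vabs[OF summable_sums[OF sb]])
    ultimately show ?thesis unfolding a_def by (metis sums_unique)
  qed
  have LHS: "T_op (S_op y \<phi>) s = suminf (\<lambda>n. suminf (a n))"
    unfolding row T_op_def S_op_def[of s] c_def by simp
  have diag: "(\<Sum>i\<le>m. a i (m - i)) = (-1) ^ m * fact m * ((s + y) gchoose m) * ((-1) gchoose m) * \<phi> (-1 - of_nat m)" for m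
  proof -
    have "(\<Sum>i\<le>m. a i (m - i)) = (\<Sum>i\<le>m. fact m * \<phi> (-1 - of_nat m) * ((s gchoose i) * (y gchoose (m - i))))"
      by (rule sum.cong) (auto simp: aeq mult_ac)
    also have "\<dots> = fact m * \<phi> (-1 - of_nat m) * ((s + y) gchoose m)"
      by (simp add: sum_distrib_left[symmetric] gbinomial_Vandermonde atMost_atLeast0)
    finally show ?thesis unfolding gchoose_neg1 by (simp add: power_mult_distrib[symmetric] mult_ac)
  qed
  have RHS: "T_op \<phi> (s + y) = suminf (\<lambda>m. \<Sum>i\<le>m. a i (m - i))"
    unfolding diag T_op_def S_op_def by simp
  show ?thesis unfolding LHS RHS using sums_unique[OF DS] by simp
qed

end
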